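(* Let $n\ge 4$ and let $L=(l_1,\dots,l_n)$ be a generic length vector satisfying the strict triangle inequality. For $k=1,\dots,n$ let $N_k$ denote the number of short subsets of $[n]$ of cardinality $k$. Then the number of vertices of $\Gamma(L)$ equals $$\sum_{k=1}^n N_k\,2^{\,n-k}\;-\;2\cdot 3^{\,n-1}\;+\;2^n .$$
   Context: Let $n\ge 4$ and $L=(l_1,\dots,l_n)$ be positive reals with $l_i<\sum_{j\ne i}l_j$ for every $i$ (strict triangle inequality), and generic: there is no $J\subseteq[n]$ with $\sum_{i\in J}l_i=\sum_{i\notin J}l_i$. Here $[n]=\{1,\dots,n\}$ and $|L|=\sum_{i=1}^n l_i$. A set $I\subseteq[n]$ is short if $\sum_{i\in I}l_i<|L|/2$ and long otherwise. A cyclically ordered partition of $[n]$ into $k$ parts is a sequence $(A_1,\dots,A_k)$ of pairwise disjoint nonempty sets with union $[n]$, considered up to cyclic shifts $(A_1,\dots,A_k)\sim(A_2,\dots,A_k,A_1)$; there is no ordering inside a part. It is admissible if every part is short. The graph $\Gamma(L)$ has as vertices the admissible cyclically ordered partitions of $[n]$ into 3 parts, written $(I,J,K)$, and as edges the admissible cyclically ordered partitions into 4 parts $(A,B,C,D)$; such an edge is incident to each of the partitions $(A\cup B,C,D)$, $(A,B\cup C,D)$, $(A,B,C\cup D)$, $(D\cup A,B,C)$ that is admissible. Equivalently, two vertices are adjacent iff one is obtained from the other by moving a nonempty proper subset of one part into another part. ($\Gamma(L)$ is the 1-skeleton of a cell decomposition of the moduli space of planar configurations of $L$.) *)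

theory Defs
  imports Complex_Main
begin

text \<open>A length vector L = (l_1,...,l_n) is a function l :: nat => real, relevant on [n] = {1..n}.\<close>

definition total_length :: "(nat \<Rightarrow> real) \<Rightarrow> nat \<Rightarrow> real" where
  "total_length l n = (\<Sum>i\<in>{1..n}. l i)"

definition short :: "(nat \<Rightarrow> real) \<Rightarrow> nat \<Rightarrow> nat set \<Rightarrow> bool" where
  "short l n I \<longleftrightarrow> (\<Sum>i\<in>I. l i) < total_length l n / 2"

definition strict_triangle :: "(nat \<Rightarrow> real) \<Rightarrow> nat \<Rightarrow> bool" where
  "strict_triangle l n \<longleftrightarrow> (\<forall>i\<in>{1..n}. l i < (\<Sum>j\<in>{1..n} - {i}. l j))"

definition generic :: "(nat \<Rightarrow> real) \<Rightarrow> nat \<Rightarrow> bool" where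
  "generic l n \<longleftrightarrow> \<not> (\<exists>J. J \<subseteq> {1..n} \<and> (\<Sum>i\<in>J. l i) = (\<Sum>i\<in>{1..n} - J. l i))"

definition admissible_triple :: "(nat \<Rightarrow> real) \<Rightarrow> nat \<Rightarrow> nat set \<times> nat set \<times> nat set \<Rightarrow> bool" where
  "admissible_triple l n t = (case t of (I, J, K) \<Rightarrow>
     I \<noteq> {} \<and> J \<noteq> {} \<and> K \<noteq> {} \<and> I \<inter> J = {} \<and> J \<inter> K = {} \<and> I \<inter> K = {} \<and>
     I \<union> J \<union> K = {1..n} \<and> short l n I \<and> short l n J \<and> short l n K)"

text \<open>Cyclically ordered partition = orbit of an ordered triple under cyclic shifts.\<close>
definition cyc_class :: "nat set \<times> nat set \<times> nat set \<Rightarrow> (nat set \<times> nat set \<times> nat set) set" where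
  "cyc_class t = (case t of (I, J, K) \<Rightarrow> {(I, J, K), (J, K, I), (K, I, J)})"

definition Gamma_vertices :: "(nat \<Rightarrow> real) \<Rightarrow> nat \<Rightarrow> (nat set \<times> nat set \<times> nat set) set set" where
  "Gamma_vertices l n = cyc_class ` {t. admissible_triple l n t}"

end

theory Submission imports Defs begin

lemma compl_short:
  assumes gen: "generic l n" and I: "I \<subseteq> {1..n}"
  shows "short l n ({1..n} - I) \<longleftrightarrow> \<not> short l n I"
proof -
  have s: "sum l ({1..n}-I) = total_length l n - sum l I"
    using sum_diff[of "{1..n}" I l] I unfolding total_length_def by simp
  have "sum l I \<noteq> sum l ({1..n} - I)" using gen I unfolding generic_def by blast
  then show ?thesis unfolding short_def s by linarith
qed

lemma sub_long_short:
  assumes gen: "generic l n" and pos: "\<forall>i\<in>{1..n}. l i > 0"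
    and I: "I \<subseteq> {1..n}" and J: "J \<subseteq> {1..n} - I" and nI: "\<not> short l n I"
  shows "short l n J"
proof -
  have "sum l J \<le> sum l ({1..n} - I)"
    by (rule sum_mono2) (use J pos in \<open>auto intro: less_imp_le\<close>)
  moreover have "short l n ({1..n} - I)" using compl_short[OF gen I] nI by simp
  ultimately show ?thesis unfolding short_def by linarith
qed

lemma pow3:
  assumes "finite U"
  shows "(\<Sum>I\<in>Pow U. (2::int)^card(U-I)) = 3^card U"
  using assms
proof (induction U rule: finite_induct)
  case empty
  then show ?case by simp
next
  case (insert a F)
  have inj: "inj_on (insert a) (Pow F)"
    proof (rule inj_onI)
    fix x y assume "x \<in> Pow F" "y \<in> Pow F" "insert a x = insert a y"
    then have "insert a x - {a} = insert a y - {a}" "a \<notin> x" "a \<notin> y" using insert(2) by auto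
    then show "x = y" by simp
  qed
  have d: "Pow F \<inter> insert a ` Pow F = {}" using insert(2) by blast
  have "(\<Sum>I\<in>Pow (insert a F). (2::int)^card(insert a F-I))
     = (\<Sum>I\<in>Pow F. (2::int)^card(insert a F-I)) + (\<Sum>I\<in>insert a ` Pow F. (2::int)^card(insert a F-I))"
    unfolding Pow_insert using insert(1) d by (simp add: sum.union_disjoint)
  also have "(\<Sum>I\<in>insert a ` Pow F. (2::int)^card(insert a F-I)) = (\<Sum>I\<in>Pow F. (2::int)^card(insert a F- insert a I))"
    by (simp add: sum.reindex[OF inj])
  also have "\<dots> = (\<Sum>I\<in>Pow F. (2::int)^card(F-I))"
  proof (rule sum.cong)
    fix I assume "I \<in> Pow F"
    then have "insert a F - insert a I = F - I" using insert(2) by auto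
    then show "(2::int)^card(insert a F- insert a I) = 2^card(F-I)" by simp
  qed simp
  also have "(\<Sum>I\<in>Pow F. (2::int)^card(insert a F-I)) = (\<Sum>I\<in>Pow F. 2 * 2^card(F-I))"
  proof (rule sum.cong)
    fix I assume "I \<in> Pow F"
    then have "insert a F - I = insert a (F - I)" "a \<notin> F - I" using insert(2) by auto
    then show "(2::int)^card(insert a F-I) = 2 * 2^card(F-I)" using insert(1) by simp
  qed simp
  finally show ?case using insert by (simp add: sum_distrib_left[symmetric])
qed

lemma sum_D:
  assumes "finite U"
  shows "(\<Sum>(I,J)\<in>Sigma (Pow U) (\<lambda>I. Pow(U-I)). (f I :: int)) = (\<Sum>I\<in>Pow U. f I * 2^card(U-I))"
proof -
  have "(\<Sum>(I,J)\<in>Sigma (Pow U) (\<lambda>I. Pow(U-I)). f I) = (\<Sum>I\<in>Pow U. \<Sum>J\<in>Pow(U-I). f I)"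
    using sum.Sigma[of "Pow U" "\<lambda>I. Pow(U-I)" "\<lambda>I J. f I"] assms by simp
  also have "\<dots> = (\<Sum>I\<in>Pow U. f I * 2^card(U-I))"
    using assms by (simp add: card_Pow mult.commute)
  finally show ?thesis .
qed


lemma adm_finite: "finite {t. admissible_triple l n t}"
proof (rule finite_subset)
  show "{t. admissible_triple l n t} \<subseteq> Pow {1..n} \<times> Pow {1..n} \<times> Pow {1..n}"
    unfolding admissible_triple_def by auto
qed simp

lemma mem_Gamma:
  "c \<in> Gamma_vertices l n \<longleftrightarrow> (\<exists>I J K. admissible_triple l n (I,J,K) \<and> c = cyc_class (I,J,K))"
proof
  assume "c \<in> Gamma_vertices l n"
  then obtain t0 where t0: "admissible_triple l n t0" "c = cyc_class t0"
    unfolding Gamma_vertices_def by auto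
  obtain I J K where e: "t0 = (I,J,K)" by (cases t0)
  show "\<exists>I J K. admissible_triple l n (I,J,K) \<and> c = cyc_class (I,J,K)" using t0 e by blast
next
  assume "\<exists>I J K. admissible_triple l n (I,J,K) \<and> c = cyc_class (I,J,K)"
  then show "c \<in> Gamma_vertices l n" unfolding Gamma_vertices_def by blast
qed

lemma cyc_simp: "cyc_class (I,J,K) = {(I,J,K),(J,K,I),(K,I,J)}"
  unfolding cyc_class_def by simp

lemma cyc_mem: "x \<in> cyc_class (I,J,K) \<Longrightarrow> cyc_class x = cyc_class (I,J,K)"
  unfolding cyc_simp by (elim insertE emptyE) (simp_all add: cyc_simp insert_commute)

lemma rot_adm: "admissible_triple l n (I,J,K) \<Longrightarrow> admissible_triple l n (J,K,I)"
  unfolding admissible_triple_def by auto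

lemma cyc_count:
  "card {t. admissible_triple l n t} = 3 * card (Gamma_vertices l n)"
proof -
  let ?A = "{t. admissible_triple l n t}"
  have cls: "cyc_class (I,J,K) \<subseteq> ?A" if a: "admissible_triple l n (I,J,K)" for I J K
    using rot_adm[OF a] rot_adm[OF rot_adm[OF a]] a unfolding cyc_simp by simp
  have U: "\<Union>(Gamma_vertices l n) = ?A"
  proof
    show "\<Union>(Gamma_vertices l n) \<subseteq> ?A"
    proof
      fix x assume "x \<in> \<Union>(Gamma_vertices l n)"
      then obtain c where "c \<in> Gamma_vertices l n" "x \<in> c" by blast
      then obtain I J K where "admissible_triple l n (I,J,K)" "x \<in> cyc_class (I,J,K)"
        unfolding mem_Gamma by blast
      then show "x \<in> ?A" using cls by blast
    qed
    show "?A \<subseteq> \<Union>(Gamma_vertices l n)"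
    proof
      fix x assume xA: "x \<in> ?A"
      obtain I J K where e: "x = (I,J,K)" by (cases x)
      have "cyc_class (I,J,K) \<in> Gamma_vertices l n" using xA e unfolding mem_Gamma by blast
      moreover have "x \<in> cyc_class (I,J,K)" unfolding e cyc_simp by simp
      ultimately show "x \<in> \<Union>(Gamma_vertices l n)" by blast
    qed
  qed
  have c3: "\<forall>c\<in>Gamma_vertices l n. card c = 3"
  proof
    fix c assume "c \<in> Gamma_vertices l n"
    then obtain I J K where t: "admissible_triple l n (I,J,K)" and c: "c = cyc_class (I,J,K)"
      unfolding mem_Gamma by blast
    have "I \<noteq> J" "J \<noteq> K" "I \<noteq> K" using t unfolding admissible_triple_def by auto
    then show "card c = 3" unfolding c cyc_simp by simp
  qed
  have dis: "\<forall>c1\<in>Gamma_vertices l n. \<forall>c2\<in>Gamma_vertices l n. c1 \<noteq> c2 \<longrightarrow> c1 \<inter> c2 = {}"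
  proof (intro ballI impI)
    fix c1 c2 assume c12: "c1 \<in> Gamma_vertices l n" "c2 \<in> Gamma_vertices l n" "c1 \<noteq> c2"
    show "c1 \<inter> c2 = {}"
    proof (rule ccontr)
      assume "c1 \<inter> c2 \<noteq> {}"
      then obtain x where x: "x \<in> c1" "x \<in> c2" by blast
      have h: "c = cyc_class x" if cG: "c \<in> Gamma_vertices l n" and xc: "x \<in> c" for c
      proof -
        obtain I J K where c: "c = cyc_class (I,J,K)"
          using cG unfolding mem_Gamma by blast
        show ?thesis using cyc_mem[of x I J K] xc unfolding c by simp
      qed
      have "c1 = c2" using h[OF c12(1) x(1)] h[OF c12(2) x(2)] by simp
      then show False using c12(3) by simp
    qed
  qed
  have fG: "finite (Gamma_vertices l n)" unfolding Gamma_vertices_def using adm_finite by blast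
  have fU: "finite (\<Union>(Gamma_vertices l n))" unfolding U by (rule adm_finite)
  have "3 * card (Gamma_vertices l n) = card (\<Union>(Gamma_vertices l n))"
    by (rule card_partition) (use fG fU c3 dis in blast)+
  then show ?thesis using U by simp
qed

lemma adm_G:
  assumes gen: "generic l n"
  shows "card {t. admissible_triple l n t} =
    card {p \<in> Sigma (Pow {1..n}) (\<lambda>I. Pow({1..n}-I)).
            short l n (fst p) \<and> short l n (snd p) \<and> short l n ({1..n} - fst p - snd p)}"
    (is "card ?A = card ?G")
proof (rule bij_betw_same_card)
  let ?U = "{1..n::nat}"
  show "bij_betw (\<lambda>(I,J,K). (I,J)) ?A ?G"
  proof (rule bij_betw_byWitness[where f' = "\<lambda>(I,J). (I,J,?U-I-J)"])
    show "\<forall>a\<in>?A. (\<lambda>(I,J). (I,J,?U-I-J)) ((\<lambda>(I,J,K). (I,J)) a) = a"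
      unfolding admissible_triple_def by auto
    show "\<forall>a'\<in>?G. (\<lambda>(I,J,K). (I,J)) ((\<lambda>(I,J). (I,J,?U-I-J)) a') = a'" by auto
    show "(\<lambda>(I,J,K). (I,J)) ` ?A \<subseteq> ?G"
    proof
      fix p assume "p \<in> (\<lambda>(I,J,K). (I,J)) ` ?A"
      then obtain I J K where a: "admissible_triple l n (I,J,K)" and p: "p = (I,J)" by auto
      have "K = ?U - I - J" using a unfolding admissible_triple_def by auto
      then show "p \<in> ?G" using a unfolding admissible_triple_def p by auto
    qed
    show "(\<lambda>(I,J). (I,J,?U-I-J)) ` ?G \<subseteq> ?A"
    proof
      fix t assume "t \<in> (\<lambda>(I,J). (I,J,?U-I-J)) ` ?G"
      then obtain I J where IJ: "(I,J) \<in> ?G" and t: "t = (I,J,?U-I-J)" by auto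
      have IU: "I \<subseteq> ?U" and JU: "J \<subseteq> ?U - I" and s: "short l n I" "short l n J" "short l n (?U-I-J)"
        using IJ by auto
      have "I \<noteq> {}"
      proof
        assume "I = {}"
        then have "?U - I - J = ?U - J" by simp
        then show False using compl_short[OF gen, of J] JU s by auto
      qed
      moreover have "J \<noteq> {}"
      proof
        assume "J = {}"
        then have "?U - I - J = ?U - I" by simp
        then show False using compl_short[OF gen IU] s by auto
      qed
      moreover have "?U - I - J \<noteq> {}"
      proof
        assume "?U - I - J = {}"
        then have "J = ?U - I" using JU by auto
        then show False using compl_short[OF gen IU] s by auto
      qed
      ultimately show "t \<in> ?A" unfolding t admissible_triple_def using IU JU s by auto
    qed
  qed
qed


lemma bool3:
  assumes "\<not> x \<Longrightarrow> y \<and> z" "\<not> y \<Longrightarrow> x \<and> z" "\<not> z \<Longrightarrow> x \<and> y"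
  shows "(if x \<and> y \<and> z then 1 else 0) = (1::int) - of_bool (\<not> x) - of_bool (\<not> y) - of_bool (\<not> z)"
  using assms by (cases x; cases y; cases z) auto

lemma G_sum:
  assumes gen: "generic l n" and pos: "\<forall>i\<in>{1..n}. l i > 0"
  shows "int (card {p \<in> Sigma (Pow {1..n}) (\<lambda>I. Pow({1..n}-I)).
            short l n (fst p) \<and> short l n (snd p) \<and> short l n ({1..n} - fst p - snd p)})
    = 3^n - 3 * (\<Sum>I\<in>Pow {1..n}. of_bool (\<not> short l n I) * 2^card({1..n}-I))"
proof -
  let ?U = "{1..n::nat}"
  let ?D = "Sigma (Pow ?U) (\<lambda>I. Pow(?U-I))"
  let ?sh = "short l n"
  have fD: "finite ?D" by auto
  define f1 where "f1 = (\<lambda>p::nat set \<times> nat set. (of_bool (\<not> ?sh (fst p)))::int)"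
  define f2 where "f2 = (\<lambda>p::nat set \<times> nat set. (of_bool (\<not> ?sh (snd p)))::int)"
  define f3 where "f3 = (\<lambda>p::nat set \<times> nat set. (of_bool (\<not> ?sh (?U - fst p - snd p)))::int)"
  have "int (card {p \<in> ?D. ?sh (fst p) \<and> ?sh (snd p) \<and> ?sh (?U - fst p - snd p)})
      = (\<Sum>p\<in>{p \<in> ?D. ?sh (fst p) \<and> ?sh (snd p) \<and> ?sh (?U - fst p - snd p)}. 1)" by simp
  also have "\<dots> = (\<Sum>p\<in>?D. if ?sh (fst p) \<and> ?sh (snd p) \<and> ?sh (?U - fst p - snd p) then 1 else 0)"
    using fD by (rule sum.inter_filter)
  also have "\<dots> = (\<Sum>p\<in>?D. 1 - f1 p - f2 p - f3 p)"
  proof (rule sum.cong)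
    fix p assume "p \<in> ?D"
    then obtain I J where p: "p = (I,J)" and IU: "I \<subseteq> ?U" and JU: "J \<subseteq> ?U - I" by auto
    have KU: "?U - I - J \<subseteq> ?U - I" "?U - I - J \<subseteq> ?U - J" "?U - I - J \<subseteq> ?U" by auto
    have JU': "J \<subseteq> ?U" "I \<subseteq> ?U - J" "I \<subseteq> ?U - (?U - I - J)" "J \<subseteq> ?U - (?U - I - J)" using JU IU by auto
    have a: "\<not> ?sh I \<Longrightarrow> ?sh J \<and> ?sh (?U - I - J)"
      using sub_long_short[OF gen pos IU JU] sub_long_short[OF gen pos IU KU(1)] by auto
    have b: "\<not> ?sh J \<Longrightarrow> ?sh I \<and> ?sh (?U - I - J)"
      using sub_long_short[OF gen pos JU'(1) JU'(2)] sub_long_short[OF gen pos JU'(1) KU(2)] by auto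
    have c: "\<not> ?sh (?U - I - J) \<Longrightarrow> ?sh I \<and> ?sh J"
      using sub_long_short[OF gen pos KU(3) JU'(3)] sub_long_short[OF gen pos KU(3) JU'(4)] by auto
    show "(if ?sh (fst p) \<and> ?sh (snd p) \<and> ?sh (?U - fst p - snd p) then 1 else 0) = 1 - f1 p - f2 p - f3 p"
      unfolding p f1_def f2_def f3_def fst_conv snd_conv by (rule bool3[OF a b c])
  qed simp
  also have "\<dots> = (\<Sum>p\<in>?D. 1) - sum f1 ?D - sum f2 ?D - sum f3 ?D"
    by (simp add: sum_subtractf)
  also have "sum f2 ?D = sum f1 ?D"
    by (rule sum.reindex_bij_witness[where i = "\<lambda>(I,J). (J,I)" and j = "\<lambda>(I,J). (J,I)"])
       (auto simp: f1_def f2_def)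
  also have "sum f3 ?D = sum f1 ?D"
    by (rule sum.reindex_bij_witness[where i = "\<lambda>(I,J). (?U-I-J,J)" and j = "\<lambda>(I,J). (?U-I-J,J)"])
       (auto simp: f1_def f3_def)
  also have "(\<Sum>p\<in>?D. (1::int)) = (\<Sum>(I,J)\<in>?D. (\<lambda>I. 1) I)" by (simp add: case_prod_beta)
  also have "\<dots> = (\<Sum>I\<in>Pow ?U. 2^card(?U-I))" by (subst sum_D) auto
  also have "\<dots> = 3^n" using pow3[of ?U] by simp
  also have "sum f1 ?D = (\<Sum>(I,J)\<in>?D. (\<lambda>I. of_bool (\<not> ?sh I)) I)" by (simp add: f1_def case_prod_beta)
  also have "\<dots> = (\<Sum>I\<in>Pow ?U. of_bool (\<not> ?sh I) * 2^card(?U-I))" by (subst sum_D) auto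
  finally show ?thesis by simp
qed


lemma regroup:
  "(\<Sum>k=1..n. int (card {I. I \<subseteq> {1..n} \<and> card I = k \<and> short l n I}) * 2 ^ (n - k))
   = (\<Sum>I\<in>Pow {1..n} - {{}}. of_bool (short l n I) * 2^card({1..n}-I))"
proof -
  let ?U = "{1..n::nat}"
  let ?S = "{I \<in> Pow ?U. I \<noteq> {} \<and> short l n I}"
  have fS: "finite ?S" by auto
  have img: "card ` ?S \<subseteq> {1..n}"
  proof
    fix k assume "k \<in> card ` ?S"
    then obtain I where "I \<in> ?S" "k = card I" by auto
    moreover then have "finite I" using finite_subset[of I ?U] by auto
    ultimately show "k \<in> {1..n}" using card_mono[of ?U I] by (auto simp: card_gt_0_iff Suc_le_eq)
  qed
  have "(\<Sum>k=1..n. int (card {I. I \<subseteq> ?U \<and> card I = k \<and> short l n I}) * 2 ^ (n - k))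
      = (\<Sum>k=1..n. \<Sum>I\<in>{x. x \<in> ?S \<and> card x = k}. (2::int) ^ (n - card I))"
  proof (rule sum.cong)
    fix k assume k: "k \<in> {1..n}"
    have e: "{x. x \<in> ?S \<and> card x = k} = {I. I \<subseteq> ?U \<and> card I = k \<and> short l n I}"
      using k by auto
    show "int (card {I. I \<subseteq> ?U \<and> card I = k \<and> short l n I}) * 2 ^ (n - k)
        = (\<Sum>I\<in>{x. x \<in> ?S \<and> card x = k}. (2::int) ^ (n - card I))"
      unfolding e by simp
  qed simp
  also have "\<dots> = (\<Sum>I\<in>?S. (2::int) ^ (n - card I))"
    by (rule sum.group[OF fS _ img]) simp
  also have "\<dots> = (\<Sum>I\<in>Pow ?U - {{}}. of_bool (short l n I) * 2^card(?U-I))"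
  proof -
    have "?S = {I \<in> Pow ?U - {{}}. short l n I}" by auto
    then have "(\<Sum>I\<in>?S. (2::int) ^ (n - card I)) = (\<Sum>I\<in>Pow ?U - {{}}. if short l n I then 2 ^ (n - card I) else 0)"
      using sum.inter_filter[of "Pow ?U - {{}}" "\<lambda>I. (2::int) ^ (n - card I)" "short l n"] by simp
    also have "\<dots> = (\<Sum>I\<in>Pow ?U - {{}}. of_bool (short l n I) * 2^card(?U-I))"
    proof (rule sum.cong)
      fix I assume "I \<in> Pow ?U - {{}}"
      then have "I \<subseteq> ?U" by auto
      then have "card (?U - I) = n - card I" using card_Diff_subset[of I ?U] finite_subset[of I ?U] by simp
      then show "(if short l n I then (2::int) ^ (n - card I) else 0) = of_bool (short l n I) * 2^card(?U-I)"
        by simp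
    qed simp
    finally show ?thesis .
  qed
  finally show ?thesis .
qed


theorem mainTheorem1:
  fixes l :: "nat \<Rightarrow> real" and n :: nat
  assumes "n \<ge> 4"
    and "\<forall>i\<in>{1..n}. l i > 0"
    and "strict_triangle l n"
    and "generic l n"
  shows "int (card (Gamma_vertices l n)) =
           (\<Sum>k=1..n. int (card {I. I \<subseteq> {1..n} \<and> card I = k \<and> short l n I}) * 2 ^ (n - k))
           - 2 * 3 ^ (n - 1) + 2 ^ n"
proof -
  let ?U = "{1..n::nat}"
  define B where "B = (\<Sum>I\<in>Pow ?U. of_bool (\<not> short l n I) * (2::int)^card(?U-I))"
  define A where "A = (\<Sum>I\<in>Pow ?U - {{}}. of_bool (short l n I) * (2::int)^card(?U-I))"
  have c1: "3 * int (card (Gamma_vertices l n)) = 3^n - 3 * B"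
    using cyc_count[of l n] adm_G[OF assms(4)] G_sum[OF assms(4) assms(2)] unfolding B_def
    by simp
  have tot: "total_length l n > 0"
    unfolding total_length_def using assms(1,2) by (intro sum_pos) auto
  have sh0: "short l n {}" unfolding short_def using tot by simp
  have "(3::int)^n = (\<Sum>I\<in>Pow ?U. 2^card(?U-I))" using pow3[of ?U] by simp
  also have "\<dots> = (\<Sum>I\<in>Pow ?U. of_bool (short l n I) * 2^card(?U-I) + of_bool (\<not> short l n I) * 2^card(?U-I))"
    by (rule sum.cong) auto
  also have "\<dots> = (\<Sum>I\<in>Pow ?U. of_bool (short l n I) * 2^card(?U-I)) + B"
    unfolding B_def by (simp add: sum.distrib)
  also have "(\<Sum>I\<in>Pow ?U. of_bool (short l n I) * (2::int)^card(?U-I)) = 2^n + A"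
    unfolding A_def using sum.remove[of "Pow ?U" "{}" "\<lambda>I. of_bool (short l n I) * (2::int)^card(?U-I)"] sh0
    by simp
  finally have c2: "(3::int)^n = 2^n + A + B" .
  have c3: "(3::int)^n = 3 * 3^(n-1)" using assms(1) by (cases n) auto
  show ?thesis unfolding regroup A_def[symmetric] using c1 c2 c3 by linarith
qed

end
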